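(* Let $Y$ be a random variable whose moment generating function $E[e^{tY}]$ exists for $|t|<r_0$ for some $r_0>0$. Let $(Y_j)_{j\ge1}$ be mutually independent copies of $Y$, $S_0=0$, $S_k=Y_1+\cdots+Y_k$ for $k\ge1$. Let $r$ be a positive integer. Define $$\phi_n^Y(x)=\sum_{k=0}^{n}{n\brace k}_Y x^k,\qquad {n\brace k}_Y=\frac{1}{k!}\sum_{i=0}^{k}\binom{k}{i}(-1)^{k-i}E[S_i^n],$$ $$\phi_{n,r}^Y(x)=\sum_{k=0}^{n}{n+r\brace k+r}_{r,Y}x^k,\qquad {n+r\brace k+r}_{r,Y}=\frac{1}{k!}\sum_{j=0}^{k}\binom{k}{j}(-1)^{k-j}E\big[(S_j+r)^n\big].$$ Then for all integers $m,n\ge0$, $$\phi_{m+n,r}^Y(x)=\sum_{i=0}^{n}\sum_{k=0}^{m}\binom{n}{i}x^k\phi_i^Y(x)\frac{1}{k!}\sum_{j=k}^{m}\binom{m}{j}\sum_{l_1+\cdots+l_k=j}\binom{j}{l_1,\dots,l_k}E\Big[(S_k+r)^{n-i}\prod_{p=1}^{k}Y_p^{l_p}\Big]r^{m-j},$$ where the innermost sum runs over $k$-tuples $(l_1,\dots,l_k)$ of positive integers with sum $j$.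
   Context: $\phi_n^Y(x)$ and $\phi_{n,r}^Y(x)$ are the probabilistic Bell and probabilistic $r$-Bell polynomials associated with $Y$. For $k=0$ the sum over $(l_1,\dots,l_k)$ equals $1$ if $j=0$ and $0$ otherwise (empty product equal to $1$). $\binom{j}{l_1,\dots,l_k}$ is the multinomial coefficient. *)

theory Defs
  imports "HOL-Probability.Probability"
begin

definition psum :: "(nat \<Rightarrow> 'a \<Rightarrow> real) \<Rightarrow> nat \<Rightarrow> 'a \<Rightarrow> real" where
  "psum X k \<omega> = (\<Sum>j=1..k. X j \<omega>)"

definition stirlingY :: "'a measure \<Rightarrow> (nat \<Rightarrow> 'a \<Rightarrow> real) \<Rightarrow> nat \<Rightarrow> nat \<Rightarrow> real" where
  "stirlingY M X n k = (1 / fact k) *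
     (\<Sum>i=0..k. real (k choose i) * (-1) ^ (k - i) * (\<integral>\<omega>. (psum X i \<omega>) ^ n \<partial>M))"

definition bellY :: "'a measure \<Rightarrow> (nat \<Rightarrow> 'a \<Rightarrow> real) \<Rightarrow> nat \<Rightarrow> real \<Rightarrow> real" where
  "bellY M X n x = (\<Sum>k=0..n. stirlingY M X n k * x ^ k)"

definition rstirlingY :: "'a measure \<Rightarrow> (nat \<Rightarrow> 'a \<Rightarrow> real) \<Rightarrow> nat \<Rightarrow> nat \<Rightarrow> nat \<Rightarrow> real" where
  "rstirlingY M X r n k = (1 / fact k) *
     (\<Sum>j=0..k. real (k choose j) * (-1) ^ (k - j) * (\<integral>\<omega>. (psum X j \<omega> + real r) ^ n \<partial>M))"

definition rbellY :: "'a measure \<Rightarrow> (nat \<Rightarrow> 'a \<Rightarrow> real) \<Rightarrow> nat \<Rightarrow> nat \<Rightarrow> real \<Rightarrow> real" where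
  "rbellY M X r n x = (\<Sum>k=0..n. rstirlingY M X r n k * x ^ k)"

definition compositions :: "nat \<Rightarrow> nat \<Rightarrow> (nat \<Rightarrow> nat) set" where
  "compositions k j = {l \<in> {1..k} \<rightarrow>\<^sub>E {1..j}. (\<Sum>p=1..k. l p) = j}"

definition multinom :: "nat \<Rightarrow> nat \<Rightarrow> (nat \<Rightarrow> nat) \<Rightarrow> real" where
  "multinom j k l = fact j / (\<Prod>p=1..k. fact (l p))"

end

theory Submission
  imports Defs "HOL-Computational_Algebra.Formal_Power_Series"
begin

inductive prv :: "(nat \<Rightarrow> 'a \<Rightarrow> real) \<Rightarrow> ('a \<Rightarrow> real) \<Rightarrow> bool" for X where
  const: "prv X (\<lambda>\<omega>. c)"
| mulX: "prv X f \<Longrightarrow> p \<ge> 1 \<Longrightarrow> prv X (\<lambda>\<omega>. f \<omega> * X p \<omega>)"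
| add: "prv X f \<Longrightarrow> prv X g \<Longrightarrow> prv X (\<lambda>\<omega>. f \<omega> + g \<omega>)"

lemma prv_cmult: "prv X f \<Longrightarrow> prv X (\<lambda>\<omega>. c * f \<omega>)"
proof (induction rule: prv.induct)
  case (const c')
  then show ?case by (rule prv.const)
next
  case (mulX f p)
  then show ?case using prv.mulX[of X "\<lambda>\<omega>. c * f \<omega>" p] by (simp add: mult.assoc)
next
  case (add f g)
  then show ?case using prv.add[of X "\<lambda>\<omega>. c * f \<omega>" "\<lambda>\<omega>. c * g \<omega>"] by (simp add: distrib_left)
qed

lemma prv_mult: assumes "prv X f" "prv X g" shows "prv X (\<lambda>\<omega>. f \<omega> * g \<omega>)"
  using assms(2)
proof (induction rule: prv.induct)
  case (const c)
  then show ?case using prv_cmult[OF assms(1), of c] by (simp add: mult.commute)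
next
  case (mulX g p)
  then show ?case using prv.mulX[of X "\<lambda>\<omega>. f \<omega> * g \<omega>" p] by (simp add: mult.assoc)
next
  case (add g1 g2)
  then show ?case using prv.add[of X "\<lambda>\<omega>. f \<omega> * g1 \<omega>" "\<lambda>\<omega>. f \<omega> * g2 \<omega>"] by (simp add: distrib_left)
qed

lemma prv_X: "p \<ge> 1 \<Longrightarrow> prv X (X p)"
  using prv.mulX[OF prv.const[of X 1], of p] by simp

lemma prv_power: "prv X f \<Longrightarrow> prv X (\<lambda>\<omega>. f \<omega> ^ n)"
  by (induction n) (auto intro: prv.const prv_mult)

lemma prv_sum: "finite A \<Longrightarrow> (\<And>a. a \<in> A \<Longrightarrow> prv X (f a)) \<Longrightarrow> prv X (\<lambda>\<omega>. \<Sum>a\<in>A. f a \<omega>)"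
  by (induction A rule: finite_induct) (auto intro: prv.const prv.add)

lemma prv_prod: "finite A \<Longrightarrow> (\<And>a. a \<in> A \<Longrightarrow> prv X (f a)) \<Longrightarrow> prv X (\<lambda>\<omega>. \<Prod>a\<in>A. f a \<omega>)"
  by (induction A rule: finite_induct) (auto intro: prv.const prv_mult)

lemma prv_S: "finite A \<Longrightarrow> A \<subseteq> {1..} \<Longrightarrow> prv X (\<lambda>\<omega>. \<Sum>p\<in>A. X p \<omega>)"
  by (rule prv_sum) (auto intro!: prv_X)

lemma prod_insert_upd:
  fixes X :: "nat \<Rightarrow> 'a \<Rightarrow> real"
  assumes "finite B" "a \<notin> B"
  shows "(\<Prod>q\<in>insert a B. X q \<omega> ^ (l(a:=c)) q) = X a \<omega> ^ c * (\<Prod>q\<in>B. X q \<omega> ^ l q)"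
proof -
  have "(\<Prod>q\<in>B. X q \<omega> ^ (l(a:=c)) q) = (\<Prod>q\<in>B. X q \<omega> ^ l q)"
    by (rule prod.cong) (use assms in auto)
  then show ?thesis using assms by simp
qed

locale momsetup = prob_space M for M :: "'a measure" +
  fixes X :: "nat \<Rightarrow> 'a \<Rightarrow> real" and mu :: "nat \<Rightarrow> real"
  assumes indep: "indep_vars (\<lambda>_. borel) X {1..}"
  and Xint: "\<And>j l. j \<ge> 1 \<Longrightarrow> integrable M (\<lambda>\<omega>. X j \<omega> ^ l)"
  and Xmom: "\<And>j l. j \<ge> 1 \<Longrightarrow> (\<integral>\<omega>. X j \<omega> ^ l \<partial>M) = mu l"
begin

lemma Xmeas: "j \<ge> 1 \<Longrightarrow> X j \<in> borel_measurable M"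
  using indep unfolding indep_vars_def by auto

lemma prod_mom:
  assumes "finite B" "B \<subseteq> {1..}"
  shows "integrable M (\<lambda>\<omega>. \<Prod>q\<in>B. X q \<omega> ^ l q)"
    and "(\<integral>\<omega>. (\<Prod>q\<in>B. X q \<omega> ^ l q) \<partial>M) = (\<Prod>q\<in>B. mu (l q))"
proof -
  have ind: "indep_vars (\<lambda>_. borel) (\<lambda>q \<omega>. X q \<omega> ^ l q) B"
    using indep_vars_compose2[OF indep_vars_subset[OF indep assms(2)], of "\<lambda>q y. y ^ l q" "\<lambda>_. borel"]
    by simp
  show "integrable M (\<lambda>\<omega>. \<Prod>q\<in>B. X q \<omega> ^ l q)"
    by (rule indep_vars_integrable[OF assms(1) ind]) (use assms Xint in auto)
  have "(\<integral>\<omega>. (\<Prod>q\<in>B. X q \<omega> ^ l q) \<partial>M) = (\<Prod>q\<in>B. \<integral>\<omega>. X q \<omega> ^ l q \<partial>M)"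
    by (rule indep_vars_lebesgue_integral[OF assms(1) ind]) (use assms Xint in auto)
  also have "\<dots> = (\<Prod>q\<in>B. mu (l q))"
    by (rule prod.cong) (use assms Xmom in auto)
  finally show "(\<integral>\<omega>. (\<Prod>q\<in>B. X q \<omega> ^ l q) \<partial>M) = (\<Prod>q\<in>B. mu (l q))" .
qed

lemma prv_int_aux:
  assumes "prv X f"
  shows "finite B \<Longrightarrow> B \<subseteq> {1..} \<Longrightarrow> integrable M (\<lambda>\<omega>. f \<omega> * (\<Prod>q\<in>B. X q \<omega> ^ l q))"
  using assms
proof (induction arbitrary: B l rule: prv.induct)
  case (const c)
  then show ?case using prod_mom(1)[of B l] by simp
next
  case (mulX f p)
  show ?case
  proof (cases "p \<in> B")
    case True
    define l' where "l' = l(p := Suc (l p))"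
    have "(\<Prod>q\<in>B. X q \<omega> ^ l' q) = X p \<omega> * (\<Prod>q\<in>B. X q \<omega> ^ l q)" for \<omega>
    proof -
      have "(\<Prod>q\<in>B. X q \<omega> ^ l' q) = X q' \<omega> ^ l' q' * (\<Prod>q\<in>B-{p}. X q \<omega> ^ l' q)" if "q' = p" for q'
        using that True mulX.prems(1) by (simp add: prod.remove)
      moreover have "(\<Prod>q\<in>B. X q \<omega> ^ l q) = X p \<omega> ^ l p * (\<Prod>q\<in>B-{p}. X q \<omega> ^ l q)"
        using True mulX.prems(1) by (simp add: prod.remove)
      moreover have "(\<Prod>q\<in>B-{p}. X q \<omega> ^ l' q) = (\<Prod>q\<in>B-{p}. X q \<omega> ^ l q)"
        by (rule prod.cong) (auto simp: l'_def)
      ultimately show ?thesis by (simp add: l'_def)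
    qed
    then show ?thesis using mulX.IH[OF mulX.prems, of l'] by (simp add: mult.assoc)
  next
    case False
    have "(\<Prod>q\<in>insert p B. X q \<omega> ^ (l(p:=1)) q) = X p \<omega> * (\<Prod>q\<in>B. X q \<omega> ^ l q)" for \<omega>
      using prod_insert_upd[OF mulX.prems(1) False, of X] by simp
    then show ?thesis using mulX.IH[of "insert p B" "l(p:=1)"] mulX.prems mulX.hyps
      by (simp add: mult.assoc)
  qed
next
  case (add f g)
  then show ?case by (simp add: distrib_right)
qed

lemma prv_int: "prv X f \<Longrightarrow> integrable M f"
  using prv_int_aux[of f "{}"] by simp

end


definition mgf :: "(nat \<Rightarrow> real) \<Rightarrow> real fps" where "mgf mu = Abs_fps (\<lambda>q. mu q / fact q)"
definition ee :: "(nat \<Rightarrow> real) \<Rightarrow> nat \<Rightarrow> nat \<Rightarrow> real" where "ee mu j c = fact c * fps_nth (mgf mu ^ j) c"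

lemma ee_0: "ee mu 0 c = 0 ^ c"
  by (simp add: ee_def)

lemma ee_Suc: "ee mu (Suc j) d = (\<Sum>c\<le>d. real (d choose c) * mu c * ee mu j (d - c))"
proof -
  have "ee mu (Suc j) d = fact d * (\<Sum>i=0..d. (mu i / fact i) * fps_nth (mgf mu ^ j) (d - i))"
    by (simp add: ee_def fps_mult_nth mgf_def)
  also have "\<dots> = (\<Sum>i=0..d. fact d * ((mu i / fact i) * fps_nth (mgf mu ^ j) (d - i)))"
    by (simp add: sum_distrib_left)
  also have "\<dots> = (\<Sum>c\<le>d. real (d choose c) * mu c * ee mu j (d - c))"
    unfolding atLeast0AtMost
  proof (rule sum.cong)
    fix c assume "c \<in> {..d}"
    then have "c \<le> d" by simp
    then show "fact d * ((mu c / fact c) * fps_nth (mgf mu ^ j) (d - c)) = real (d choose c) * mu c * ee mu j (d - c)"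
      by (simp add: ee_def binomial_fact field_simps)
  qed simp
  finally show ?thesis .
qed

context momsetup
begin

lemma LA:
  assumes "finite A" "A \<subseteq> {1..}"
  shows "finite B \<Longrightarrow> B \<subseteq> {1..} \<Longrightarrow> A \<inter> B = {} \<Longrightarrow>
    (\<integral>\<omega>. (\<Sum>p\<in>A. X p \<omega>) ^ d * (\<Prod>q\<in>B. X q \<omega> ^ l q) \<partial>M) = ee mu (card A) d * (\<Prod>q\<in>B. mu (l q))"
  using assms
proof (induction A arbitrary: d B l rule: finite_induct)
  case empty
  then show ?case using prod_mom(2)[of B l] by (simp add: ee_0)
next
  case (insert a A)
  have aB: "a \<notin> B" using insert by auto
  have pw: "(\<Sum>p\<in>insert a A. X p \<omega>) ^ d * (\<Prod>q\<in>B. X q \<omega> ^ l q) =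
     (\<Sum>c\<le>d. real (d choose c) * ((\<Sum>p\<in>A. X p \<omega>) ^ (d - c) * (\<Prod>q\<in>insert a B. X q \<omega> ^ (l(a:=c)) q)))" for \<omega>
    unfolding prod_insert_upd[OF insert.prems(1) aB] using insert(1,2)
    by (simp add: binomial_ring sum_distrib_right sum_distrib_left mult_ac)
  have int: "integrable M (\<lambda>\<omega>. (\<Sum>p\<in>A. X p \<omega>) ^ (d - c) * (\<Prod>q\<in>insert a B. X q \<omega> ^ (l(a:=c)) q))" for c
    by (rule prv_int_aux) (use insert in \<open>auto intro!: prv_power prv_S\<close>)
  have "(\<integral>\<omega>. (\<Sum>p\<in>insert a A. X p \<omega>) ^ d * (\<Prod>q\<in>B. X q \<omega> ^ l q) \<partial>M) =
     (\<Sum>c\<le>d. real (d choose c) * (\<integral>\<omega>. (\<Sum>p\<in>A. X p \<omega>) ^ (d - c) * (\<Prod>q\<in>insert a B. X q \<omega> ^ (l(a:=c)) q) \<partial>M))"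
    unfolding pw by (subst Bochner_Integration.integral_sum) (use int in \<open>auto simp del: fun_upd_apply intro!: integrable_mult_right\<close>)
  also have "\<dots> = (\<Sum>c\<le>d. real (d choose c) * (ee mu (card A) (d - c) * (mu c * (\<Prod>q\<in>B. mu (l q)))))"
  proof (rule sum.cong)
    fix c
    have "(\<Prod>q\<in>insert a B. mu ((l(a:=c)) q)) = mu c * (\<Prod>q\<in>B. mu (l q))"
    proof -
      have "(\<Prod>q\<in>B. mu ((l(a:=c)) q)) = (\<Prod>q\<in>B. mu (l q))"
        by (rule prod.cong) (use aB in auto)
      then show ?thesis using aB insert.prems by simp
    qed
    moreover have "(\<integral>\<omega>. (\<Sum>p\<in>A. X p \<omega>) ^ (d - c) * (\<Prod>q\<in>insert a B. X q \<omega> ^ (l(a:=c)) q) \<partial>M)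
       = ee mu (card A) (d - c) * (\<Prod>q\<in>insert a B. mu ((l(a:=c)) q))"
      by (rule insert.IH) (use insert in auto)
    ultimately show "real (d choose c) * (\<integral>\<omega>. (\<Sum>p\<in>A. X p \<omega>) ^ (d - c) * (\<Prod>q\<in>insert a B. X q \<omega> ^ (l(a:=c)) q) \<partial>M) =
      real (d choose c) * (ee mu (card A) (d - c) * (mu c * (\<Prod>q\<in>B. mu (l q))))"
      by simp
  qed simp
  also have "\<dots> = ee mu (card (insert a A)) d * (\<Prod>q\<in>B. mu (l q))"
    using insert(1,2) by (simp add: ee_Suc sum_distrib_right sum_distrib_left mult_ac)
  finally show ?case .
qed

lemma LAA:
  assumes "finite A" "A \<subseteq> {1..}" "finite A'" "A' \<subseteq> {1..}" "A \<inter> A' = {}"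
  shows "finite B \<Longrightarrow> B \<subseteq> {1..} \<Longrightarrow> A \<inter> B = {} \<Longrightarrow> A' \<inter> B = {} \<Longrightarrow>
    (\<integral>\<omega>. (\<Sum>p\<in>A. X p \<omega>) ^ d * (\<Sum>p\<in>A'. X p \<omega>) ^ b * (\<Prod>q\<in>B. X q \<omega> ^ l q) \<partial>M)
      = ee mu (card A) d * ee mu (card A') b * (\<Prod>q\<in>B. mu (l q))"
  using assms(3-5)
proof (induction A' arbitrary: b B l rule: finite_induct)
  case empty
  have "(\<integral>\<omega>. (\<Sum>p\<in>A. X p \<omega>) ^ d * (\<Sum>p\<in>{}. X p \<omega>) ^ b * (\<Prod>q\<in>B. X q \<omega> ^ l q) \<partial>M)
     = (\<integral>\<omega>. 0 ^ b * ((\<Sum>p\<in>A. X p \<omega>) ^ d * (\<Prod>q\<in>B. X q \<omega> ^ l q)) \<partial>M)"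
    by (simp add: mult_ac)
  also have "\<dots> = 0 ^ b * (\<integral>\<omega>. (\<Sum>p\<in>A. X p \<omega>) ^ d * (\<Prod>q\<in>B. X q \<omega> ^ l q) \<partial>M)"
    by simp
  also have "\<dots> = 0 ^ b * (ee mu (card A) d * (\<Prod>q\<in>B. mu (l q)))"
    using LA[OF assms(1,2) empty.prems(1-3)] by simp
  finally show ?case by (simp add: ee_0 mult_ac)
next
  case (insert a A')
  have aB: "a \<notin> B" using insert by auto
  have pw: "(\<Sum>p\<in>A. X p \<omega>) ^ d * (\<Sum>p\<in>insert a A'. X p \<omega>) ^ b * (\<Prod>q\<in>B. X q \<omega> ^ l q) =
     (\<Sum>c\<le>b. real (b choose c) * ((\<Sum>p\<in>A. X p \<omega>) ^ d * (\<Sum>p\<in>A'. X p \<omega>) ^ (b - c) * (\<Prod>q\<in>insert a B. X q \<omega> ^ (l(a:=c)) q)))" for \<omega>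
    unfolding prod_insert_upd[OF insert.prems(1) aB] using insert(1,2)
    by (simp add: binomial_ring sum_distrib_right sum_distrib_left mult_ac)
  have int: "integrable M (\<lambda>\<omega>. (\<Sum>p\<in>A. X p \<omega>) ^ d * (\<Sum>p\<in>A'. X p \<omega>) ^ (b - c) * (\<Prod>q\<in>insert a B. X q \<omega> ^ (l(a:=c)) q))" for c
    by (rule prv_int_aux) (use insert assms in \<open>auto intro!: prv_power prv_S prv_mult\<close>)
  have "(\<integral>\<omega>. (\<Sum>p\<in>A. X p \<omega>) ^ d * (\<Sum>p\<in>insert a A'. X p \<omega>) ^ b * (\<Prod>q\<in>B. X q \<omega> ^ l q) \<partial>M) =
     (\<Sum>c\<le>b. real (b choose c) * (\<integral>\<omega>. (\<Sum>p\<in>A. X p \<omega>) ^ d * (\<Sum>p\<in>A'. X p \<omega>) ^ (b - c) * (\<Prod>q\<in>insert a B. X q \<omega> ^ (l(a:=c)) q) \<partial>M))"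
    unfolding pw by (subst Bochner_Integration.integral_sum) (use int in \<open>auto simp del: fun_upd_apply intro!: integrable_mult_right\<close>)
  also have "\<dots> = (\<Sum>c\<le>b. real (b choose c) * (ee mu (card A) d * ee mu (card A') (b - c) * (mu c * (\<Prod>q\<in>B. mu (l q)))))"
  proof (rule sum.cong)
    fix c
    have "(\<Prod>q\<in>insert a B. mu ((l(a:=c)) q)) = mu c * (\<Prod>q\<in>B. mu (l q))"
    proof -
      have "(\<Prod>q\<in>B. mu ((l(a:=c)) q)) = (\<Prod>q\<in>B. mu (l q))"
        by (rule prod.cong) (use aB in auto)
      then show ?thesis using aB insert.prems by simp
    qed
    moreover have "(\<integral>\<omega>. (\<Sum>p\<in>A. X p \<omega>) ^ d * (\<Sum>p\<in>A'. X p \<omega>) ^ (b - c) * (\<Prod>q\<in>insert a B. X q \<omega> ^ (l(a:=c)) q) \<partial>M)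
       = ee mu (card A) d * ee mu (card A') (b - c) * (\<Prod>q\<in>insert a B. mu ((l(a:=c)) q))"
      by (rule insert.IH) (use insert in auto)
    ultimately show "real (b choose c) * (\<integral>\<omega>. (\<Sum>p\<in>A. X p \<omega>) ^ d * (\<Sum>p\<in>A'. X p \<omega>) ^ (b - c) * (\<Prod>q\<in>insert a B. X q \<omega> ^ (l(a:=c)) q) \<partial>M) =
      real (b choose c) * (ee mu (card A) d * ee mu (card A') (b - c) * (mu c * (\<Prod>q\<in>B. mu (l q))))"
      by simp
  qed simp
  also have "\<dots> = ee mu (card A) d * ee mu (card (insert a A')) b * (\<Prod>q\<in>B. mu (l q))"
    using insert(1,2) by (simp add: ee_Suc sum_distrib_right sum_distrib_left mult_ac)
  finally show ?case .
qed

lemma LAA0: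
  assumes "finite A" "A \<subseteq> {1..}" "finite A'" "A' \<subseteq> {1..}" "A \<inter> A' = {}"
  shows "(\<integral>\<omega>. (\<Sum>p\<in>A. X p \<omega>) ^ d * (\<Sum>p\<in>A'. X p \<omega>) ^ b \<partial>M) = ee mu (card A) d * ee mu (card A') b"
  using LAA[OF assms, of "{}" d b] by simp

end


lemma comp_0: "compositions 0 j = (if j = 0 then {\<lambda>_. undefined} else {})"
  unfolding compositions_def by (auto simp: PiE_def extensional_def)

lemma comp_le: assumes "l \<in> compositions k j" "p \<in> {1..k}" shows "1 \<le> l p" "l p \<le> j"
  using assms unfolding compositions_def by (auto simp: PiE_def Pi_def)

lemma comp_Suc_bij:
  "bij_betw (\<lambda>(c, l'). l'(Suc k := c)) (SIGMA c:{1..j}. compositions k (j - c)) (compositions (Suc k) j)"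
proof (rule bij_betwI')
  fix u v assume u: "u \<in> (SIGMA c:{1..j}. compositions k (j - c))" and v: "v \<in> (SIGMA c:{1..j}. compositions k (j - c))"
  obtain c l where [simp]: "u = (c, l)" by (cases u)
  obtain c' l' where [simp]: "v = (c', l')" by (cases v)
  have l: "l \<in> {1..k} \<rightarrow>\<^sub>E {1..j-c}" and l': "l' \<in> {1..k} \<rightarrow>\<^sub>E {1..j-c'}"
    using u v by (auto simp: compositions_def)
  show "((\<lambda>(c, l'). l'(Suc k := c)) u = (\<lambda>(c, l'). l'(Suc k := c)) v) = (u = v)"
  proof
    assume eq: "(\<lambda>(c, l'). l'(Suc k := c)) u = (\<lambda>(c, l'). l'(Suc k := c)) v"
    then have "c = c'" by (metis (mono_tags) \<open>u = (c, l)\<close> \<open>v = (c', l')\<close> case_prod_conv fun_upd_same)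
    moreover have "l = l'"
    proof
      fix p show "l p = l' p"
      proof (cases "p = Suc k")
        case True
        then show ?thesis using l l' by (auto simp: PiE_def extensional_def)
      next
        case False
        then show ?thesis using eq by (metis (mono_tags) \<open>u = (c, l)\<close> \<open>v = (c', l')\<close> case_prod_conv fun_upd_other)
      qed
    qed
    ultimately show "u = v" by simp
  qed simp
next
  fix u assume u: "u \<in> (SIGMA c:{1..j}. compositions k (j - c))"
  obtain c l where [simp]: "u = (c, l)" by (cases u)
  have c: "1 \<le> c" "c \<le> j" and l: "l \<in> {1..k} \<rightarrow>\<^sub>E {1..j-c}" and s: "(\<Sum>p=1..k. l p) = j - c"
    using u by (auto simp: compositions_def)
  have "(\<Sum>p=1..Suc k. (l(Suc k := c)) p) = (\<Sum>p=1..k. (l(Suc k := c)) p) + c" by simp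
  also have "(\<Sum>p=1..k. (l(Suc k := c)) p) = (\<Sum>p=1..k. l p)" by (rule sum.cong) auto
  finally have "(\<Sum>p=1..Suc k. (l(Suc k := c)) p) = j" using s c by simp
  moreover have "l(Suc k := c) \<in> {1..Suc k} \<rightarrow>\<^sub>E {1..j}"
    using l c by (auto simp: PiE_def Pi_def extensional_def)
  ultimately show "(\<lambda>(c, l'). l'(Suc k := c)) u \<in> compositions (Suc k) j"
    by (simp add: compositions_def)
next
  fix L assume L: "L \<in> compositions (Suc k) j"
  define c where "c = L (Suc k)"
  define l where "l = L(Suc k := undefined)"
  have LP: "L \<in> {1..Suc k} \<rightarrow>\<^sub>E {1..j}" and s: "(\<Sum>p=1..Suc k. L p) = j"
    using L by (auto simp: compositions_def)
  have c: "1 \<le> c" "c \<le> j" using LP by (auto simp: c_def PiE_def Pi_def)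
  have s2: "(\<Sum>p=1..k. l p) = (\<Sum>p=1..k. L p)" by (rule sum.cong) (auto simp: l_def)
  have s3: "(\<Sum>p=1..k. L p) = j - c" using s by (simp add: c_def)
  have le: "L p \<le> j - c" if "p \<in> {1..k}" for p
    using member_le_sum[of p "{1..k}" L] that s3 by simp
  have "l \<in> {1..k} \<rightarrow>\<^sub>E {1..j - c}"
    using LP le by (auto simp: PiE_def Pi_def extensional_def l_def)
  then have "(c, l) \<in> (SIGMA c:{1..j}. compositions k (j - c))"
    using c s2 s3 by (auto simp: compositions_def)
  moreover have "L = l(Suc k := c)" by (auto simp: l_def c_def)
  ultimately show "\<exists>u\<in>(SIGMA c:{1..j}. compositions k (j - c)). L = (\<lambda>(c, l'). l'(Suc k := c)) u"
    by force
qed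

definition Zc :: "(nat \<Rightarrow> real) \<Rightarrow> nat \<Rightarrow> nat \<Rightarrow> real" where
  "Zc y k j = (\<Sum>l\<in>compositions k j. multinom j k l * (\<Prod>p=1..k. y p ^ l p))"

lemma finite_comp: "finite (compositions k j)"
  unfolding compositions_def by (rule finite_subset[of _ "{1..k} \<rightarrow>\<^sub>E {1..j}"]) (auto intro: finite_PiE)

lemma Zc_Suc: "Zc y (Suc k) j = (\<Sum>c=1..j. real (j choose c) * y (Suc k) ^ c * Zc y k (j - c))"
proof -
  have "Zc y (Suc k) j = (\<Sum>u\<in>(SIGMA c:{1..j}. compositions k (j - c)).
       (\<lambda>l. multinom j (Suc k) l * (\<Prod>p=1..Suc k. y p ^ l p)) ((\<lambda>(c, l'). l'(Suc k := c)) u))"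
    unfolding Zc_def by (rule sum.reindex_bij_betw[OF comp_Suc_bij, symmetric])
  also have "\<dots> = (\<Sum>c=1..j. \<Sum>l\<in>compositions k (j - c).
       multinom j (Suc k) (l(Suc k := c)) * (\<Prod>p=1..Suc k. y p ^ (l(Suc k := c)) p))"
    by (subst sum.Sigma) (auto simp: finite_comp intro!: sum.cong split: prod.splits)
  also have "\<dots> = (\<Sum>c=1..j. \<Sum>l\<in>compositions k (j - c).
       real (j choose c) * y (Suc k) ^ c * (multinom (j - c) k l * (\<Prod>p=1..k. y p ^ l p)))"
  proof (intro sum.cong refl)
    fix c l assume c: "c \<in> {1..j}" and l: "l \<in> compositions k (j - c)"
    have p1: "(\<Prod>p=1..k. y p ^ (l(Suc k := c)) p) = (\<Prod>p=1..k. y p ^ l p)"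
      by (rule prod.cong) auto
    have p2: "(\<Prod>p=1..k. fact ((l(Suc k := c)) p) :: real) = (\<Prod>p=1..k. fact (l p))"
      by (rule prod.cong) auto
    have pos: "(\<Prod>p=1..k. fact (l p) :: real) \<noteq> 0" by (simp add: prod_zero_iff)
    have "multinom j (Suc k) (l(Suc k := c)) = fact j / ((\<Prod>p=1..k. fact (l p)) * fact c)"
      unfolding multinom_def using p2 by simp
    also have "\<dots> = real (j choose c) * multinom (j - c) k l"
      using c pos by (simp add: multinom_def binomial_fact field_simps)
    finally show "multinom j (Suc k) (l(Suc k := c)) * (\<Prod>p=1..Suc k. y p ^ (l(Suc k := c)) p) =
       real (j choose c) * y (Suc k) ^ c * (multinom (j - c) k l * (\<Prod>p=1..k. y p ^ l p))"
      using p1 by simp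
  qed
  also have "\<dots> = (\<Sum>c=1..j. real (j choose c) * y (Suc k) ^ c * Zc y k (j - c))"
    by (simp add: Zc_def sum_distrib_left)
  finally show ?thesis .
qed

definition Zp :: "(nat \<Rightarrow> real) \<Rightarrow> nat \<Rightarrow> nat \<Rightarrow> real" where
  "Zp y k j = (\<Sum>A\<in>Pow {1..k}. (-1) ^ (k - card A) * (\<Sum>p\<in>A. y p) ^ j)"

lemma Zp_Suc: "Zp y (Suc k) j = (\<Sum>c=1..j. real (j choose c) * y (Suc k) ^ c * Zp y k (j - c))"
proof -
  have ins: "{1..Suc k} = insert (Suc k) {1..k}" by auto
  have inj: "inj_on (insert (Suc k)) (Pow {1..k})"
    by (rule inj_onI) (metis PowD atLeastAtMost_iff insert_ident n_not_Suc_n le_antisym subsetD Suc_n_not_le_n)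
  have disj: "Pow {1..k} \<inter> insert (Suc k) ` Pow {1..k} = {}" by auto
  have "Zp y (Suc k) j = (\<Sum>A\<in>Pow {1..k}. (-1) ^ (Suc k - card A) * (\<Sum>p\<in>A. y p) ^ j)
      + (\<Sum>A\<in>insert (Suc k) ` Pow {1..k}. (-1) ^ (Suc k - card A) * (\<Sum>p\<in>A. y p) ^ j)"
    unfolding Zp_def ins Pow_insert by (rule sum.union_disjoint) (use disj in auto)
  also have "(\<Sum>A\<in>insert (Suc k) ` Pow {1..k}. (-1) ^ (Suc k - card A) * (\<Sum>p\<in>A. y p) ^ j)
      = (\<Sum>A\<in>Pow {1..k}. (-1) ^ (k - card A) * (y (Suc k) + (\<Sum>p\<in>A. y p)) ^ j)"
  proof (subst sum.reindex[OF inj], rule sum.cong)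
    fix A assume "A \<in> Pow {1..k}"
    then have A: "A \<subseteq> {1..k}" "Suc k \<notin> A" "finite A" by (auto intro: finite_subset)
    then show "((\<lambda>A. (-1) ^ (Suc k - card A) * (\<Sum>p\<in>A. y p) ^ j) \<circ> insert (Suc k)) A =
        (-1) ^ (k - card A) * (y (Suc k) + (\<Sum>p\<in>A. y p)) ^ j"
      by simp
  qed simp
  also have "(\<Sum>A\<in>Pow {1..k}. (-1) ^ (Suc k - card A) * (\<Sum>p\<in>A. y p) ^ j) =
      (\<Sum>A\<in>Pow {1..k}. - ((-1) ^ (k - card A) * (\<Sum>p\<in>A. y p) ^ j))"
  proof (rule sum.cong)
    fix A assume "A \<in> Pow {1..k}"
    then have "card A \<le> k" using card_mono[of "{1..k}" A] by auto
    then have "Suc k - card A = Suc (k - card A)" by simp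
    then show "(-1) ^ (Suc k - card A) * (\<Sum>p\<in>A. y p) ^ j = - ((-1) ^ (k - card A) * (\<Sum>p\<in>A. y p) ^ j)"
      by simp
  qed simp
  also have "(\<Sum>A\<in>Pow {1..k}. - ((-1) ^ (k - card A) * (\<Sum>p\<in>A. y p) ^ j)) +
      (\<Sum>A\<in>Pow {1..k}. (-1) ^ (k - card A) * (y (Suc k) + (\<Sum>p\<in>A. y p)) ^ j) =
      (\<Sum>A\<in>Pow {1..k}. (-1) ^ (k - card A) * ((y (Suc k) + (\<Sum>p\<in>A. y p)) ^ j - (\<Sum>p\<in>A. y p) ^ j))"
    by (simp add: sum.distrib[symmetric] sum_negf[symmetric] algebra_simps)
  also have "\<dots> = (\<Sum>A\<in>Pow {1..k}. (-1) ^ (k - card A) *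
       (\<Sum>c=1..j. real (j choose c) * y (Suc k) ^ c * (\<Sum>p\<in>A. y p) ^ (j - c)))"
  proof (rule sum.cong)
    fix A
    have "{..j} = insert 0 {1..j}" by auto
    then have "(y (Suc k) + (\<Sum>p\<in>A. y p)) ^ j = (\<Sum>p\<in>A. y p) ^ j +
       (\<Sum>c=1..j. real (j choose c) * y (Suc k) ^ c * (\<Sum>p\<in>A. y p) ^ (j - c))"
      by (simp add: binomial_ring)
    then show "(-1) ^ (k - card A) * ((y (Suc k) + (\<Sum>p\<in>A. y p)) ^ j - (\<Sum>p\<in>A. y p) ^ j) =
      (-1) ^ (k - card A) * (\<Sum>c=1..j. real (j choose c) * y (Suc k) ^ c * (\<Sum>p\<in>A. y p) ^ (j - c))"
      by simp
  qed simp
  also have "\<dots> = (\<Sum>c=1..j. real (j choose c) * y (Suc k) ^ c * Zp y k (j - c))"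
    unfolding Zp_def sum_distrib_left
    by (subst sum.swap) (simp add: mult_ac)
  finally show ?thesis .
qed

lemma Zc_Zp: "Zc y k j = Zp y k j"
proof (induction k arbitrary: j)
  case 0
  show ?case by (simp add: Zc_def Zp_def comp_0 multinom_def)
next
  case (Suc k)
  then show ?case by (simp add: Zc_Suc Zp_Suc)
qed

lemma sum_Pow_card:
  assumes "finite S"
  shows "(\<Sum>A\<in>Pow S. g (card A)) = (\<Sum>j\<le>card S. real (card S choose j) * g j)"
proof -
  have "(\<Sum>A\<in>Pow S. g (card A)) = (\<Sum>j\<le>card S. \<Sum>A\<in>{A\<in>Pow S. card A = j}. g (card A))"
    by (rule sum.group[symmetric]) (use assms card_mono in auto)
  also have "\<dots> = (\<Sum>j\<le>card S. real (card S choose j) * g j)"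
  proof (rule sum.cong)
    fix j
    have "{A\<in>Pow S. card A = j} = {B. B \<subseteq> S \<and> card B = j}" by auto
    then have "card {A\<in>Pow S. card A = j} = card S choose j" using n_subsets[OF assms] by simp
    moreover have "(\<Sum>A\<in>{A\<in>Pow S. card A = j}. g (card A)) = (\<Sum>A\<in>{A\<in>Pow S. card A = j}. g j)"
      by (rule sum.cong) auto
    ultimately show "(\<Sum>A\<in>{A\<in>Pow S. card A = j}. g (card A)) = real (card S choose j) * g j"
      by simp
  qed simp
  finally show ?thesis .
qed


definition shm :: "nat \<Rightarrow> real fps \<Rightarrow> real fps" where
  "shm m F = Abs_fps (\<lambda>c. fps_nth F (m + c) * fact (m + c) / fact c)"

lemma shm_nth: "fps_nth (shm m F) c = fps_nth F (m + c) * fact (m + c) / fact c"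
  by (simp add: shm_def)

lemma shm_add: "shm m (F + G) = shm m F + shm m G"
  by (rule fps_ext) (simp add: shm_nth field_simps)

lemma shm_const: "shm m (fps_const a * F) = fps_const a * shm m F"
  by (rule fps_ext) (simp add: shm_nth)

lemma shm_0: "shm m 0 = 0"
  by (rule fps_ext) (simp add: shm_nth)

lemma shm_sum: "finite S \<Longrightarrow> shm m (\<Sum>i\<in>S. fps_const (a i) * F i) = (\<Sum>i\<in>S. fps_const (a i) * shm m (F i))"
  by (induction S rule: finite_induct) (auto simp: shm_add shm_const shm_0)

lemma fps_of_nat_real: "(of_nat n :: real fps) = fps_const (real n)"
  by (simp add: fps_of_nat)

lemma fps_m1_pow: "((-1) :: real fps) ^ k = fps_const ((-1) ^ k)"
proof -
  have "(-1 :: real fps) = fps_const (-1)" by (simp only: fps_const_neg[symmetric] fps_const_1_eq_1)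
  then show ?thesis by (simp only: fps_const_power)
qed

lemma binom_minus1:
  fixes A :: "real fps"
  shows "(A - 1) ^ K = (\<Sum>j\<le>K. fps_const (real (K choose j) * (-1) ^ (K - j)) * A ^ j)"
proof -
  have "(A - 1) ^ K = (A + (-1)) ^ K" by simp
  also have "\<dots> = (\<Sum>j\<le>K. of_nat (K choose j) * A ^ j * (-1) ^ (K - j))"
    by (rule binomial_ring)
  also have "\<dots> = (\<Sum>j\<le>K. fps_const (real (K choose j) * (-1) ^ (K - j)) * A ^ j)"
    by (rule sum.cong) (simp_all only: fps_of_nat_real fps_m1_pow fps_const_mult[symmetric] mult_ac)
  finally show ?thesis .
qed

lemma sum_swap_tri:
  fixes f :: "nat \<Rightarrow> nat \<Rightarrow> 'b::comm_monoid_add"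
  shows "(\<Sum>k\<le>K. \<Sum>j\<le>k. f k j) = (\<Sum>j\<le>K. \<Sum>i\<le>K - j. f (j + i) j)"
proof (induction K)
  case 0
  then show ?case by simp
next
  case (Suc K)
  have "(\<Sum>j\<le>Suc K. \<Sum>i\<le>Suc K - j. f (j + i) j) = (\<Sum>j\<le>K. \<Sum>i\<le>Suc K - j. f (j + i) j) + f (Suc K) (Suc K)"
    by simp
  also have "(\<Sum>j\<le>K. \<Sum>i\<le>Suc K - j. f (j + i) j) = (\<Sum>j\<le>K. (\<Sum>i\<le>K - j. f (j + i) j) + f (Suc K) j)"
  proof (rule sum.cong)
    fix j assume "j \<in> {..K}"
    then have "Suc K - j = Suc (K - j)" by auto
    then show "(\<Sum>i\<le>Suc K - j. f (j + i) j) = (\<Sum>i\<le>K - j. f (j + i) j) + f (Suc K) j"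
      using \<open>j \<in> {..K}\<close> by simp
  qed simp
  finally show ?case using Suc by (simp add: sum.distrib add_ac)
qed

lemma AL1:
  fixes A B :: "real fps" and m :: nat
  defines "P \<equiv> \<lambda>j. shm m (B * A ^ j)"
  defines "Q \<equiv> \<lambda>k. (\<Sum>j\<le>k. fps_const (real (k choose j) * (-1) ^ (k - j)) * (P j * A ^ (k - j)))"
  shows "shm m (B * (A - 1) ^ K) = (\<Sum>k\<le>K. fps_const (real (K choose k)) * ((A - 1) ^ (K - k) * Q k))"
proof -
  have "shm m (B * (A - 1) ^ K) = (\<Sum>j\<le>K. fps_const (real (K choose j) * (-1) ^ (K - j)) * P j)"
    unfolding binom_minus1 sum_distrib_left P_def
    by (subst shm_sum[symmetric]) (simp_all add: mult_ac)
  also have "\<dots> = (\<Sum>j\<le>K. P j * (\<Sum>i\<le>K - j. fps_const (real (K choose j) * real (K - j choose i)) * ((- A) ^ i * (A - 1) ^ (K - j - i))))"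
  proof (rule sum.cong)
    fix j assume "j \<in> {..K}"
    have "(\<Sum>i\<le>K - j. fps_const (real (K choose j) * real (K - j choose i)) * ((- A) ^ i * (A - 1) ^ (K - j - i)))
       = fps_const (real (K choose j)) * (\<Sum>i\<le>K - j. of_nat (K - j choose i) * (- A) ^ i * (A - 1) ^ (K - j - i))"
      unfolding sum_distrib_left fps_of_nat_real by (simp only: fps_const_mult[symmetric] mult_ac)
    also have "\<dots> = fps_const (real (K choose j)) * ((- A) + (A - 1)) ^ (K - j)"
      by (simp only: binomial_ring)
    also have "\<dots> = fps_const (real (K choose j) * (-1) ^ (K - j))"
    proof -
      have "(- A) + (A - 1) = -1" by simp
      then show ?thesis by (simp only: fps_m1_pow fps_const_mult)
    qed
    finally show "fps_const (real (K choose j) * (-1) ^ (K - j)) * P j =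
        P j * (\<Sum>i\<le>K - j. fps_const (real (K choose j) * real (K - j choose i)) * ((- A) ^ i * (A - 1) ^ (K - j - i)))"
      by (simp add: mult_ac)
  qed simp
  also have "\<dots> = (\<Sum>j\<le>K. \<Sum>i\<le>K - j. fps_const (real (K choose (j + i)) * (real ((j + i) choose j) * (-1) ^ (j + i - j))) * ((A - 1) ^ (K - (j + i)) * (P j * A ^ (j + i - j))))"
  proof (rule sum.cong[OF refl], unfold sum_distrib_left, rule sum.cong[OF refl])
    fix j i assume j: "j \<in> {..K}" and i: "i \<in> {..K - j}"
    have ch: "real (K choose (j + i)) * real ((j + i) choose j) = real (K choose j) * real (K - j choose i)"
      using choose_mult[of j "j + i" K] j i by (simp flip: of_nat_mult)
    moreover have "K - (j + i) = K - j - i" by simp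
    moreover have mA: "(- A) ^ i = fps_const ((-1) ^ i) * A ^ i"
    proof -
      have "- A = fps_const (-1) * A" by (rule fps_ext) simp
      then show ?thesis by (simp only: power_mult_distrib fps_const_power)
    qed
    have e: "fps_const (real (K choose (j + i)) * (real ((j + i) choose j) * (-1) ^ (j + i - j))) =
       fps_const (real (K choose j) * real (K - j choose i)) * fps_const ((-1) ^ i)"
      by (simp only: fps_const_mult) (simp add: ch[symmetric])
    show "P j * (fps_const (real (K choose j) * real (K - j choose i)) * ((- A) ^ i * (A - 1) ^ (K - j - i))) =
       fps_const (real (K choose (j + i)) * (real ((j + i) choose j) * (-1) ^ (j + i - j))) * ((A - 1) ^ (K - (j + i)) * (P j * A ^ (j + i - j)))"
      unfolding e \<open>(- A) ^ i = fps_const ((-1) ^ i) * A ^ i\<close> \<open>K - (j + i) = K - j - i\<close>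
      by (simp only: mult_ac add_diff_cancel_left')
  qed
  also have "\<dots> = (\<Sum>k\<le>K. \<Sum>j\<le>k. fps_const (real (K choose k) * (real (k choose j) * (-1) ^ (k - j))) * ((A - 1) ^ (K - k) * (P j * A ^ (k - j))))"
    by (rule sum_swap_tri[symmetric])
  also have "\<dots> = (\<Sum>k\<le>K. fps_const (real (K choose k)) * ((A - 1) ^ (K - k) * Q k))"
    unfolding Q_def sum_distrib_left
    by (rule sum.cong[OF refl], rule sum.cong[OF refl]) (simp only: fps_const_mult[symmetric] mult_ac)
  finally show ?thesis .
qed


lemma pow_nth_zero:
  fixes f :: "real fps"
  assumes "fps_nth f 0 = 0"
  shows "i < a \<Longrightarrow> fps_nth (f ^ a) i = 0"
proof (induction a arbitrary: i)
  case 0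
  then show ?case by simp
next
  case (Suc a)
  have "fps_nth (f ^ Suc a) i = (\<Sum>j=0..i. fps_nth f j * fps_nth (f ^ a) (i - j))"
    by (simp add: fps_mult_nth)
  also have "\<dots> = 0"
  proof (rule sum.neutral, rule ballI)
    fix j assume "j \<in> {0..i}"
    show "fps_nth f j * fps_nth (f ^ a) (i - j) = 0"
    proof (cases "j = 0")
      case True then show ?thesis using assms by simp
    next
      case False then have "i - j < a" using Suc.prems \<open>j \<in> {0..i}\<close> by auto
      then show ?thesis using Suc.IH by simp
    qed
  qed
  finally show ?case .
qed

lemma pow_mult_nth_zero:
  fixes f g :: "real fps"
  assumes "fps_nth f 0 = 0" "n < a"
  shows "fps_nth (f ^ a * g) n = 0"
  unfolding fps_mult_nth
  by (rule sum.neutral) (use pow_nth_zero[OF assms(1)] assms(2) in auto)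

definition Er :: "(nat \<Rightarrow> real) \<Rightarrow> real \<Rightarrow> nat \<Rightarrow> nat \<Rightarrow> real" where
  "Er mu rr j N = fact N * fps_nth (fps_exp rr * mgf mu ^ j) N"

lemma Er_sum: "Er mu rr j N = (\<Sum>d\<le>N. real (N choose d) * rr ^ (N - d) * ee mu j d)"
proof -
  have "Er mu rr j N = fact N * (\<Sum>i=0..N. fps_nth (mgf mu ^ j) i * (rr ^ (N - i) / fact (N - i)))"
    unfolding Er_def by (subst mult.commute) (simp add: fps_mult_nth)
  also have "\<dots> = (\<Sum>d\<le>N. real (N choose d) * rr ^ (N - d) * ee mu j d)"
    unfolding sum_distrib_left atLeast0AtMost
  proof (rule sum.cong)
    fix d assume "d \<in> {..N}"
    then show "fact N * (fps_nth (mgf mu ^ j) d * (rr ^ (N - d) / fact (N - d))) = real (N choose d) * rr ^ (N - d) * ee mu j d"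
      by (simp add: ee_def binomial_fact field_simps)
  qed simp
  finally show ?thesis .
qed

lemma AL6: "fact a * fps_nth (shm m F * G) a =
   (\<Sum>c\<le>a. real (a choose c) * (fact (m + c) * fps_nth F (m + c)) * (fact (a - c) * fps_nth G (a - c)))"
  unfolding fps_mult_nth shm_nth sum_distrib_left atLeast0AtMost
proof (rule sum.cong)
  fix c assume "c \<in> {..a}"
  then show "fact a * (fps_nth F (m + c) * fact (m + c) / fact c * fps_nth G (a - c)) =
    real (a choose c) * (fact (m + c) * fps_nth F (m + c)) * (fact (a - c) * fps_nth G (a - c))"
    by (simp add: binomial_fact field_simps)
qed simp

lemma fps_const_mult_nth: "fps_nth (fps_const (c::real) * F) n = c * fps_nth F n"
  by simp

lemma stirl_fps: "(\<Sum>b=0..a. real (a choose b) * (-1) ^ (a - b) * ee mu b i) = fact i * fps_nth ((mgf mu - 1) ^ a) i"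
  unfolding binom_minus1 fps_sum_nth fps_const_mult_nth sum_distrib_left atLeast0AtMost ee_def
  by (rule sum.cong) (simp_all add: mult_ac)

lemma rstirl_fps: "(\<Sum>b=0..a. real (a choose b) * (-1) ^ (a - b) * Er mu rr b N) = fact N * fps_nth (fps_exp rr * (mgf mu - 1) ^ a) N"
  unfolding binom_minus1 sum_distrib_left fps_sum_nth atLeast0AtMost Er_def
proof (rule sum.cong)
  fix b
  have "fps_exp rr * (fps_const (real (a choose b) * (-1) ^ (a - b)) * mgf mu ^ b) =
    fps_const (real (a choose b) * (-1) ^ (a - b)) * (fps_exp rr * mgf mu ^ b)"
    by (rule mult.left_commute)
  then show "real (a choose b) * (-1) ^ (a - b) * (fact N * fps_nth (fps_exp rr * mgf mu ^ b) N) =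
    fact N * fps_nth (fps_exp rr * (fps_const (real (a choose b) * (-1) ^ (a - b)) * mgf mu ^ b)) N"
    by (simp only: fps_const_mult_nth) simp
qed simp

context momsetup
begin

lemma I0:
  assumes "finite A" "A \<subseteq> {1..}" "finite A'" "A' \<subseteq> {1..}" "A \<inter> A' = {}"
  shows "(\<integral>\<omega>. ((\<Sum>p\<in>A. X p \<omega>) + rr) ^ N * (\<Sum>p\<in>A'. X p \<omega>) ^ b \<partial>M) = Er mu rr (card A) N * ee mu (card A') b"
proof -
  have pw: "((\<Sum>p\<in>A. X p \<omega>) + rr) ^ N * (\<Sum>p\<in>A'. X p \<omega>) ^ b =
     (\<Sum>d\<le>N. real (N choose d) * rr ^ (N - d) * ((\<Sum>p\<in>A. X p \<omega>) ^ d * (\<Sum>p\<in>A'. X p \<omega>) ^ b))" for \<omega>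
    by (simp add: binomial_ring sum_distrib_right sum_distrib_left mult_ac)
  have int: "integrable M (\<lambda>\<omega>. (\<Sum>p\<in>A. X p \<omega>) ^ d * (\<Sum>p\<in>A'. X p \<omega>) ^ b)" for d
    by (rule prv_int) (use assms in \<open>auto intro!: prv_power prv_S prv_mult\<close>)
  have "(\<integral>\<omega>. ((\<Sum>p\<in>A. X p \<omega>) + rr) ^ N * (\<Sum>p\<in>A'. X p \<omega>) ^ b \<partial>M) =
     (\<Sum>d\<le>N. real (N choose d) * rr ^ (N - d) * (\<integral>\<omega>. (\<Sum>p\<in>A. X p \<omega>) ^ d * (\<Sum>p\<in>A'. X p \<omega>) ^ b \<partial>M))"
    unfolding pw by (subst Bochner_Integration.integral_sum) (use int in \<open>auto intro!: integrable_mult_right\<close>)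
  also have "\<dots> = (\<Sum>d\<le>N. real (N choose d) * rr ^ (N - d) * (ee mu (card A) d * ee mu (card A') b))"
    using LAA0[OF assms] by simp
  also have "\<dots> = Er mu rr (card A) N * ee mu (card A') b"
    by (simp add: Er_sum sum_distrib_right sum_distrib_left mult_ac)
  finally show ?thesis .
qed

lemma I3:
  assumes "A \<subseteq> {1..k}"
  shows "(\<integral>\<omega>. (psum X k \<omega> + rr) ^ a * ((\<Sum>p\<in>A. X p \<omega>) + rr) ^ m \<partial>M) =
    (\<Sum>c\<le>a. real (a choose c) * Er mu rr (card A) (m + c) * ee mu (k - card A) (a - c))"
proof -
  define A' where "A' = {1..k} - A"
  have fA: "finite A" using assms finite_subset by blast
  have fA': "finite A'" "A' \<subseteq> {1..}" "A \<inter> A' = {}" "A \<subseteq> {1..}" using assms by (auto simp: A'_def)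
  have cA': "card A' = k - card A" unfolding A'_def using assms fA by (simp add: card_Diff_subset)
  have ps: "psum X k \<omega> = (\<Sum>p\<in>A. X p \<omega>) + (\<Sum>p\<in>A'. X p \<omega>)" for \<omega>
    unfolding psum_def A'_def using sum.subset_diff[OF assms, of "\<lambda>p. X p \<omega>"] by (simp add: add.commute)
  have pw: "(psum X k \<omega> + rr) ^ a * ((\<Sum>p\<in>A. X p \<omega>) + rr) ^ m =
    (\<Sum>c\<le>a. real (a choose c) * (((\<Sum>p\<in>A. X p \<omega>) + rr) ^ (m + c) * (\<Sum>p\<in>A'. X p \<omega>) ^ (a - c)))" for \<omega>
  proof -
    have "(psum X k \<omega> + rr) ^ a = (((\<Sum>p\<in>A. X p \<omega>) + rr) + (\<Sum>p\<in>A'. X p \<omega>)) ^ a"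
      by (simp add: ps add_ac)
    moreover have "(((\<Sum>p\<in>A. X p \<omega>) + rr) + (\<Sum>p\<in>A'. X p \<omega>)) ^ a =
      (\<Sum>c\<le>a. of_nat (a choose c) * ((\<Sum>p\<in>A. X p \<omega>) + rr) ^ c * (\<Sum>p\<in>A'. X p \<omega>) ^ (a - c))"
      by (rule binomial_ring)
    ultimately show ?thesis
      by (simp add: sum_distrib_right sum_distrib_left power_add mult_ac)
  qed
  have int: "integrable M (\<lambda>\<omega>. ((\<Sum>p\<in>A. X p \<omega>) + rr) ^ (m + c) * (\<Sum>p\<in>A'. X p \<omega>) ^ (a - c))" for c
    by (rule prv_int) (use fA fA' in \<open>auto intro!: prv_power prv_S prv_mult prv.add prv.const\<close>)
  have "(\<integral>\<omega>. (psum X k \<omega> + rr) ^ a * ((\<Sum>p\<in>A. X p \<omega>) + rr) ^ m \<partial>M) =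
    (\<Sum>c\<le>a. real (a choose c) * (\<integral>\<omega>. ((\<Sum>p\<in>A. X p \<omega>) + rr) ^ (m + c) * (\<Sum>p\<in>A'. X p \<omega>) ^ (a - c) \<partial>M))"
    unfolding pw by (subst Bochner_Integration.integral_sum) (use int in \<open>auto intro!: integrable_mult_right\<close>)
  also have "\<dots> = (\<Sum>c\<le>a. real (a choose c) * Er mu rr (card A) (m + c) * ee mu (k - card A) (a - c))"
    using I0[OF fA fA'(4) fA'(1,2,3)] cA' by (simp add: mult_ac)
  finally show ?thesis .
qed

end


lemma comp_empty: assumes "j < k" shows "compositions k j = {}"
proof (rule ccontr)
  assume "compositions k j \<noteq> {}"
  then obtain l where l: "l \<in> compositions k j" by blast
  have "(\<Sum>p=1..k. (1::nat)) \<le> (\<Sum>p=1..k. l p)"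
    by (rule sum_mono) (use comp_le(1)[OF l] in auto)
  then have "k \<le> j" using l by (simp add: compositions_def)
  then show False using assms by simp
qed

lemma Dpw: "(\<Sum>j=k..m. real (m choose j) * Zc y k j * rr ^ (m - j)) =
   (\<Sum>A\<in>Pow {1..k}. (-1) ^ (k - card A) * ((\<Sum>p\<in>A. y p) + rr) ^ m)"
proof -
  have "(\<Sum>j=k..m. real (m choose j) * Zc y k j * rr ^ (m - j)) = (\<Sum>j\<le>m. real (m choose j) * Zc y k j * rr ^ (m - j))"
  proof (rule sum.mono_neutral_left)
    show "\<forall>j\<in>{..m} - {k..m}. real (m choose j) * Zc y k j * rr ^ (m - j) = 0"
      by (auto simp: Zc_def comp_empty)
  qed auto
  also have "\<dots> = (\<Sum>j\<le>m. \<Sum>A\<in>Pow {1..k}. (-1) ^ (k - card A) * (real (m choose j) * (\<Sum>p\<in>A. y p) ^ j * rr ^ (m - j)))"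
    unfolding Zc_Zp Zp_def by (simp add: sum_distrib_left sum_distrib_right mult_ac)
  also have "\<dots> = (\<Sum>A\<in>Pow {1..k}. (-1) ^ (k - card A) * (\<Sum>j\<le>m. real (m choose j) * (\<Sum>p\<in>A. y p) ^ j * rr ^ (m - j)))"
    by (subst sum.swap) (simp add: sum_distrib_left)
  also have "\<dots> = (\<Sum>A\<in>Pow {1..k}. (-1) ^ (k - card A) * ((\<Sum>p\<in>A. y p) + rr) ^ m)"
    by (simp add: binomial_ring)
  finally show ?thesis .
qed

context momsetup
begin

lemma R1:
  fixes rr :: real and m :: nat
  defines "P \<equiv> \<lambda>j. shm m (fps_exp rr * mgf mu ^ j)"
  defines "Q \<equiv> \<lambda>k. (\<Sum>j\<le>k. fps_const (real (k choose j) * (-1) ^ (k - j)) * (P j * mgf mu ^ (k - j)))"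
  shows "(\<Sum>j=k..m. real (m choose j) *
          (\<Sum>l\<in>compositions k j. multinom j k l *
             (\<integral>\<omega>. (psum X k \<omega> + rr) ^ a * (\<Prod>p=1..k. X p \<omega> ^ l p) \<partial>M))
          * rr ^ (m - j)) = fact a * fps_nth (Q k) a"
proof -
  let ?f = "\<lambda>l \<omega>. (psum X k \<omega> + rr) ^ a * (\<Prod>p=1..k. X p \<omega> ^ l p)"
  have prvpsum: "prv X (psum X k)"
    unfolding psum_def by (rule prv_S) auto
  have intf: "integrable M (?f l)" for l
    by (rule prv_int) (use prvpsum in \<open>auto intro!: prv_power prv_mult prv_prod prv.add prv.const prv_X\<close>)
  have "(\<Sum>j=k..m. real (m choose j) * (\<Sum>l\<in>compositions k j. multinom j k l * (\<integral>\<omega>. ?f l \<omega> \<partial>M)) * rr ^ (m - j))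
      = (\<Sum>j=k..m. \<integral>\<omega>. real (m choose j) * (\<Sum>l\<in>compositions k j. multinom j k l * ?f l \<omega>) * rr ^ (m - j) \<partial>M)"
  proof (rule sum.cong[OF refl])
    fix j
    have "(\<integral>\<omega>. (\<Sum>l\<in>compositions k j. multinom j k l * ?f l \<omega>) \<partial>M) = (\<Sum>l\<in>compositions k j. multinom j k l * (\<integral>\<omega>. ?f l \<omega> \<partial>M))"
      by (subst Bochner_Integration.integral_sum) (use intf in \<open>auto intro!: integrable_mult_right\<close>)
    then show "real (m choose j) * (\<Sum>l\<in>compositions k j. multinom j k l * (\<integral>\<omega>. ?f l \<omega> \<partial>M)) * rr ^ (m - j) =
      (\<integral>\<omega>. real (m choose j) * (\<Sum>l\<in>compositions k j. multinom j k l * ?f l \<omega>) * rr ^ (m - j) \<partial>M)"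
      by simp
  qed
  also have "\<dots> = (\<integral>\<omega>. (\<Sum>j=k..m. real (m choose j) * (\<Sum>l\<in>compositions k j. multinom j k l * ?f l \<omega>) * rr ^ (m - j)) \<partial>M)"
    by (subst Bochner_Integration.integral_sum) (use intf in \<open>auto intro!: integrable_mult_right integrable_mult_left Bochner_Integration.integrable_sum\<close>)
  also have "\<dots> = (\<integral>\<omega>. (psum X k \<omega> + rr) ^ a * (\<Sum>j=k..m. real (m choose j) * Zc (\<lambda>p. X p \<omega>) k j * rr ^ (m - j)) \<partial>M)"
    by (rule Bochner_Integration.integral_cong) (simp_all add: Zc_def sum_distrib_left sum_distrib_right mult_ac)
  also have "\<dots> = (\<integral>\<omega>. (\<Sum>A\<in>Pow {1..k}. (-1) ^ (k - card A) * ((psum X k \<omega> + rr) ^ a * ((\<Sum>p\<in>A. X p \<omega>) + rr) ^ m)) \<partial>M)"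
    unfolding Dpw by (simp add: sum_distrib_left mult_ac)
  also have "\<dots> = (\<Sum>A\<in>Pow {1..k}. (-1) ^ (k - card A) * (\<integral>\<omega>. (psum X k \<omega> + rr) ^ a * ((\<Sum>p\<in>A. X p \<omega>) + rr) ^ m \<partial>M))"
  proof (subst Bochner_Integration.integral_sum)
    fix A assume "A \<in> Pow {1..k}"
    then have "finite A" "A \<subseteq> {1..}" by (auto intro: finite_subset)
    then show "integrable M (\<lambda>\<omega>. (-1) ^ (k - card A) * ((psum X k \<omega> + rr) ^ a * ((\<Sum>p\<in>A. X p \<omega>) + rr) ^ m))"
      by (intro integrable_mult_right prv_int) (use prvpsum in \<open>auto intro!: prv_power prv_mult prv_S prv.add prv.const\<close>)
  qed simp
  also have "\<dots> = (\<Sum>A\<in>Pow {1..k}. (-1) ^ (k - card A) *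
       (\<Sum>c\<le>a. real (a choose c) * Er mu rr (card A) (m + c) * ee mu (k - card A) (a - c)))"
    by (rule sum.cong[OF refl]) (simp add: I3)
  also have "\<dots> = (\<Sum>j\<le>k. real (k choose j) * ((-1) ^ (k - j) *
       (\<Sum>c\<le>a. real (a choose c) * Er mu rr j (m + c) * ee mu (k - j) (a - c))))"
    using sum_Pow_card[of "{1..k}" "\<lambda>j. (-1) ^ (k - j) * (\<Sum>c\<le>a. real (a choose c) * Er mu rr j (m + c) * ee mu (k - j) (a - c))"]
    by simp
  also have "\<dots> = (\<Sum>j\<le>k. real (k choose j) * ((-1) ^ (k - j) * (fact a * fps_nth (P j * mgf mu ^ (k - j)) a)))"
    unfolding P_def AL6 Er_def ee_def by (simp add: mult_ac)
  also have "\<dots> = fact a * fps_nth (Q k) a"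
    unfolding Q_def fps_sum_nth fps_const_mult_nth sum_distrib_left by (simp add: mult_ac)
  finally show ?thesis .
qed

end


context momsetup
begin

lemma mu0: "mu 0 = 1"
  using Xmom[of 1 0] by (simp add: prob_space)

lemma E_psum_r: "(\<integral>\<omega>. (psum X j \<omega> + rr) ^ N \<partial>M) = Er mu rr j N"
  using I0[of "{1..j}" "{}" rr N 0] by (simp add: psum_def ee_0)

lemma E_psum: "(\<integral>\<omega>. (psum X j \<omega>) ^ N \<partial>M) = ee mu j N"
  using LAA0[of "{1..j}" "{}" N 0] by (simp add: psum_def ee_0)

lemma main_loc:
  fixes r m n :: nat and x :: real
  shows "rbellY M X r (m + n) x =
    (\<Sum>i=0..n. \<Sum>k=0..m. real (n choose i) * x ^ k * bellY M X i x * (1 / fact k) *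
       (\<Sum>j=k..m. real (m choose j) *
          (\<Sum>l\<in>compositions k j. multinom j k l *
             (\<integral>\<omega>. (psum X k \<omega> + real r) ^ (n - i) * (\<Prod>p=1..k. X p \<omega> ^ l p) \<partial>M))
          * real r ^ (m - j)))"
proof -
  define Mg where "Mg = mgf mu"
  define E0 where "E0 = fps_exp (real r)"
  define P where "P = (\<lambda>j. shm m (E0 * Mg ^ j))"
  define Q where "Q = (\<lambda>k. (\<Sum>j\<le>k. fps_const (real (k choose j) * (-1) ^ (k - j)) * (P j * Mg ^ (k - j))))"
  define T where "T = (\<lambda>k a. x ^ (k + a) * fact n / (fact k * fact a) * fps_nth ((Mg - 1) ^ a * Q k) n)"
  have Mg0: "fps_nth (Mg - 1) 0 = 0" by (simp add: Mg_def mgf_def mu0)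
  have R1': "(\<Sum>j=k..m. real (m choose j) *
          (\<Sum>l\<in>compositions k j. multinom j k l *
             (\<integral>\<omega>. (psum X k \<omega> + real r) ^ a * (\<Prod>p=1..k. X p \<omega> ^ l p) \<partial>M))
          * real r ^ (m - j)) = fact a * fps_nth (Q k) a" for k a
    unfolding Q_def P_def Mg_def E0_def by (rule R1)
  have Qz: "Q k = 0" if "m < k" for k
  proof (rule fps_ext)
    fix a
    show "fps_nth (Q k) a = fps_nth 0 a"
      using R1'[of k a] that by simp
  qed
  have Tz: "T k a = 0" if "m < k \<or> n < a" for k a
    using that Qz pow_mult_nth_zero[OF Mg0] by (auto simp: T_def)
  have rst: "rstirlingY M X r (m + n) K * x ^ K = (\<Sum>k\<le>K. T k (K - k))" for K
  proof -
    have "rstirlingY M X r (m + n) K = fact (m + n) / fact K * fps_nth (E0 * (Mg - 1) ^ K) (m + n)"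
      unfolding rstirlingY_def E_psum_r rstirl_fps E0_def Mg_def by simp
    also have "\<dots> = fact n / fact K * fps_nth (shm m (E0 * (Mg - 1) ^ K)) n"
      by (simp add: shm_nth)
    also have "shm m (E0 * (Mg - 1) ^ K) = (\<Sum>k\<le>K. fps_const (real (K choose k)) * ((Mg - 1) ^ (K - k) * Q k))"
      unfolding Q_def P_def by (rule AL1)
    finally have eq2: "rstirlingY M X r (m + n) K =
        (\<Sum>k\<le>K. fact n / fact K * (real (K choose k) * fps_nth ((Mg - 1) ^ (K - k) * Q k) n))"
      by (simp only: fps_sum_nth fps_const_mult_nth sum_distrib_left)
    show ?thesis
      unfolding eq2 sum_distrib_right
    proof (rule sum.cong[OF refl])
      fix k assume "k \<in> {..K}"
      then have kK: "k \<le> K" by simp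
      then show "fact n / fact K * (real (K choose k) * fps_nth ((Mg - 1) ^ (K - k) * Q k) n) * x ^ K = T k (K - k)"
        by (simp add: T_def binomial_fact field_simps)
    qed
  qed
  have LHS: "rbellY M X r (m + n) x = (\<Sum>K\<le>m + n. \<Sum>k\<le>K. T k (K - k))"
    unfolding rbellY_def atLeast0AtMost using rst by simp
  have stl: "stirlingY M X i a = fact i / fact a * fps_nth ((Mg - 1) ^ a) i" for i a
    unfolding stirlingY_def E_psum stirl_fps Mg_def by simp
  have bell: "bellY M X i x = (\<Sum>a\<le>n. x ^ a * (fact i / fact a) * fps_nth ((Mg - 1) ^ a) i)" if "i \<le> n" for i
  proof -
    have "bellY M X i x = (\<Sum>a\<le>i. x ^ a * (fact i / fact a) * fps_nth ((Mg - 1) ^ a) i)"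
      unfolding bellY_def stl atLeast0AtMost by (simp add: mult_ac)
    also have "\<dots> = (\<Sum>a\<le>n. x ^ a * (fact i / fact a) * fps_nth ((Mg - 1) ^ a) i)"
      by (rule sum.mono_neutral_left) (use that pow_nth_zero[OF Mg0] in auto)
    finally show ?thesis .
  qed
  have "(\<Sum>i=0..n. \<Sum>k=0..m. real (n choose i) * x ^ k * bellY M X i x * (1 / fact k) *
       (\<Sum>j=k..m. real (m choose j) *
          (\<Sum>l\<in>compositions k j. multinom j k l *
             (\<integral>\<omega>. (psum X k \<omega> + real r) ^ (n - i) * (\<Prod>p=1..k. X p \<omega> ^ l p) \<partial>M))
          * real r ^ (m - j))) =
     (\<Sum>i\<le>n. \<Sum>k\<le>m. \<Sum>a\<le>n. x ^ (k + a) * fact n / (fact k * fact a) * (fps_nth ((Mg - 1) ^ a) i * fps_nth (Q k) (n - i)))"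
    unfolding R1' atLeast0AtMost
  proof (intro sum.cong refl)
    fix i k assume i: "i \<in> {..n}" and k: "k \<in> {..m}"
    then have "i \<le> n" by simp
    have ch: "real (n choose i) * fact i * fact (n - i) = fact n"
      using \<open>i \<le> n\<close> by (simp add: binomial_fact field_simps)
    show "real (n choose i) * x ^ k * bellY M X i x * (1 / fact k) * (fact (n - i) * fps_nth (Q k) (n - i)) =
      (\<Sum>a\<le>n. x ^ (k + a) * fact n / (fact k * fact a) * (fps_nth ((Mg - 1) ^ a) i * fps_nth (Q k) (n - i)))"
      unfolding bell[OF \<open>i \<le> n\<close>] sum_distrib_left sum_distrib_right
    proof (rule sum.cong[OF refl])
      fix a
      show "real (n choose i) * x ^ k * (x ^ a * (fact i / fact a) * fps_nth ((Mg - 1) ^ a) i) * (1 / fact k) * (fact (n - i) * fps_nth (Q k) (n - i)) =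
        x ^ (k + a) * fact n / (fact k * fact a) * (fps_nth ((Mg - 1) ^ a) i * fps_nth (Q k) (n - i))"
        by (simp add: ch[symmetric] power_add field_simps)
    qed
  qed
  also have "\<dots> = (\<Sum>k\<le>m. \<Sum>a\<le>n. \<Sum>i\<le>n. x ^ (k + a) * fact n / (fact k * fact a) * (fps_nth ((Mg - 1) ^ a) i * fps_nth (Q k) (n - i)))"
    by (subst sum.swap) (subst (2) sum.swap, rule refl)
  also have "\<dots> = (\<Sum>k\<le>m. \<Sum>a\<le>n. T k a)"
    unfolding T_def fps_mult_nth atLeast0AtMost sum_distrib_left by (rule refl)
  also have "\<dots> = (\<Sum>(k, a)\<in>{..m} \<times> {..n}. T k a)"
    by (rule sum.cartesian_product)
  also have "\<dots> = (\<Sum>(k, a)\<in>{(k, a). k + a \<le> m + n}. T k a)"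
  proof (rule sum.mono_neutral_left)
    show "finite {(k, a). k + a \<le> m + n}"
      by (rule finite_subset[of _ "{..m+n} \<times> {..m+n}"]) auto
    show "{..m} \<times> {..n} \<subseteq> {(k, a). k + a \<le> m + n}" by auto
    show "\<forall>i\<in>{(k, a). k + a \<le> m + n} - {..m} \<times> {..n}. (case i of (k, a) \<Rightarrow> T k a) = 0"
      using Tz by (metis (no_types, lifting) DiffE SigmaI atMost_iff case_prod_conv not_le surj_pair)
  qed
  also have "\<dots> = (\<Sum>K\<le>m + n. \<Sum>k\<le>K. T k (K - k))"
    by (rule sum.triangle_reindex_eq)
  finally show ?thesis using LHS by simp
qed

end


lemma pow_fact_le_exp:
  fixes z :: real
  assumes "0 \<le> z"
  shows "z ^ l / fact l \<le> exp z"
proof -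
  have s: "summable (\<lambda>n. z ^ n / fact n)"
    using summable_exp_generic[of z] by (simp add: divide_inverse mult.commute)
  have "(\<Sum>n\<in>{l}. z ^ n / fact n) \<le> (\<Sum>n. z ^ n / fact n)"
    by (rule sum_le_suminf[OF s]) (use assms in auto)
  also have "\<dots> = exp z"
    by (simp add: exp_def divide_inverse mult.commute)
  finally show ?thesis by simp
qed

lemma pow_bound:
  fixes y t :: real
  assumes "0 < t"
  shows "\<bar>y ^ l\<bar> \<le> fact l / t ^ l * (exp (t * y) + exp (- t * y))"
proof -
  have "(t * \<bar>y\<bar>) ^ l / fact l \<le> exp (t * \<bar>y\<bar>)"
    by (rule pow_fact_le_exp) (use assms in simp)
  also have "exp (t * \<bar>y\<bar>) \<le> exp (t * y) + exp (- t * y)"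
    by (cases "0 \<le> y") (auto simp: abs_if add_increasing add_increasing2)
  finally have "t ^ l * \<bar>y\<bar> ^ l \<le> fact l * (exp (t * y) + exp (- t * y))"
    by (simp add: power_mult_distrib divide_le_eq mult.commute)
  then have "\<bar>y\<bar> ^ l \<le> fact l * (exp (t * y) + exp (- t * y)) / t ^ l"
    using assms by (simp add: le_divide_eq mult.commute)
  then show ?thesis by (simp add: power_abs)
qed

theorem theorem2p7:
  fixes M :: "'a measure" and Y :: "'a \<Rightarrow> real" and X :: "nat \<Rightarrow> 'a \<Rightarrow> real"
    and r0 :: real and r m n :: nat and x :: real
  assumes "prob_space M"
    and "Y \<in> borel_measurable M"
    and "r0 > 0"
    and "\<And>t. \<bar>t\<bar> < r0 \<Longrightarrow> integrable M (\<lambda>\<omega>. exp (t * Y \<omega>))"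
    and "prob_space.indep_vars M (\<lambda>_. borel) X {1..}"
    and "\<And>j. j \<ge> 1 \<Longrightarrow> distr M borel (X j) = distr M borel Y"
    and "r > 0"
  shows "rbellY M X r (m + n) x =
    (\<Sum>i=0..n. \<Sum>k=0..m. real (n choose i) * x ^ k * bellY M X i x * (1 / fact k) *
       (\<Sum>j=k..m. real (m choose j) *
          (\<Sum>l\<in>compositions k j. multinom j k l *
             (\<integral>\<omega>. (psum X k \<omega> + real r) ^ (n - i) * (\<Prod>p=1..k. X p \<omega> ^ l p) \<partial>M))
          * real r ^ (m - j)))"
proof -
  define t where "t = r0 / 2"
  have t: "0 < t" "\<bar>t\<bar> < r0" "\<bar>- t\<bar> < r0" using assms(3) by (auto simp: t_def)
  have Yl: "integrable M (\<lambda>\<omega>. Y \<omega> ^ l)" for l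
  proof (rule Bochner_Integration.integrable_bound)
    show "integrable M (\<lambda>\<omega>. fact l / t ^ l * (exp (t * Y \<omega>) + exp (- t * Y \<omega>)))"
      using assms(4)[OF t(2)] assms(4)[OF t(3)] by (intro integrable_mult_right Bochner_Integration.integrable_add) auto
    show "(\<lambda>\<omega>. Y \<omega> ^ l) \<in> borel_measurable M" using assms(2) by measurable
    show "AE \<omega> in M. norm (Y \<omega> ^ l) \<le> norm (fact l / t ^ l * (exp (t * Y \<omega>) + exp (- t * Y \<omega>)))"
    proof (rule AE_I2)
      fix \<omega>
      have "\<bar>Y \<omega> ^ l\<bar> \<le> fact l / t ^ l * (exp (t * Y \<omega>) + exp (- t * Y \<omega>))"
        by (rule pow_bound[OF t(1)])
      also have "\<dots> \<le> \<bar>fact l / t ^ l * (exp (t * Y \<omega>) + exp (- t * Y \<omega>))\<bar>" by (rule abs_ge_self)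
      finally show "norm (Y \<omega> ^ l) \<le> norm (fact l / t ^ l * (exp (t * Y \<omega>) + exp (- t * Y \<omega>)))"
        by simp
    qed
  qed
  have Xm: "X j \<in> borel_measurable M" if "j \<ge> 1" for j
    using assms(5) that unfolding prob_space.indep_vars_def[OF assms(1)] by auto
  have pm: "(\<lambda>y::real. y ^ l) \<in> borel_measurable borel" for l by measurable
  have ax: "momsetup_axioms M X (\<lambda>l. \<integral>\<omega>. Y \<omega> ^ l \<partial>M)"
  proof (unfold momsetup_axioms_def, intro conjI allI impI)
    show "prob_space.indep_vars M (\<lambda>_. borel) X {1..}" by (rule assms(5))
  next
    fix j l :: nat assume j: "1 \<le> j"
    have "integrable (distr M borel (X j)) (\<lambda>y. y ^ l)"
      unfolding assms(6)[OF j] using integrable_distr_eq[OF assms(2) pm] Yl by simp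
    then show "integrable M (\<lambda>\<omega>. X j \<omega> ^ l)"
      using integrable_distr_eq[OF Xm[OF j] pm] by simp
  next
    fix j l :: nat assume j: "1 \<le> j"
    have "(\<integral>\<omega>. X j \<omega> ^ l \<partial>M) = integral\<^sup>L (distr M borel (X j)) (\<lambda>y. y ^ l)"
      using integral_distr[OF Xm[OF j] pm] by simp
    also have "\<dots> = integral\<^sup>L (distr M borel Y) (\<lambda>y. y ^ l)" unfolding assms(6)[OF j] ..
    also have "\<dots> = (\<integral>\<omega>. Y \<omega> ^ l \<partial>M)"
      using integral_distr[OF assms(2) pm] by simp
    finally show "(\<integral>\<omega>. X j \<omega> ^ l \<partial>M) = (\<integral>\<omega>. Y \<omega> ^ l \<partial>M)" .
  qed
  interpret momsetup M X "\<lambda>l. \<integral>\<omega>. Y \<omega> ^ l \<partial>M"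
    by (rule momsetup.intro[OF assms(1) ax])
  show ?thesis by (rule main_loc)
qed

end
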